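(* Let $\mathcal{M}_\Sigma$ be a trace monoid, $a_1\in\Sigma$ and $p\in(0,p_\Sigma)$. Then $$B_{\Sigma,p}\bigl(\mathrm{Pyr}(a_1)\bigr)=\mu_\Sigma(p)\,p\,\frac{\mu_{\Sigma\setminus\mathscr{L}(a_1)}(p)}{\mu_{\Sigma\setminus\{a_1\}}(p)}.$$
   Context: Let $\Sigma$ be a finite alphabet and $\mathcal{R}$ a reflexive and symmetric binary relation on $\Sigma$. The trace monoid $\mathcal{M}_\Sigma$ is the quotient of $\Sigma^*$ by the congruence generated by $ab=ba$ for all $(a,b)\notin\mathcal{R}$. For $\Sigma'\subseteq\Sigma$, $\mathcal{M}_{\Sigma'}$ is the submonoid generated by $\Sigma'$. $|x|$ is the length of $x$; $\max(x)$ is the set of letters $a$ with $x=y\cdot a$ for some trace $y$. $\mathscr{L}(a)=\{b\in\Sigma:(a,b)\in\mathcal{R}\}$. $\mathrm{Pyr}(a_1)=\{z\cdot a_1: z\in\mathcal{M}_{\Sigma\setminus\{a_1\}},\ \max(z)\subseteq\mathscr{L}(a_1)\}$. For $S\subseteq\Sigma$, a clique of $S$ is a subset of $S$ of pairwise non-$\mathcal{R}$-related letters (empty set included); $\mu_S(X)=\sum_{\gamma\text{ clique of }S}(-1)^{|\gamma|}X^{|\gamma|}$, $\mu_\emptyset=1$. For $S\neq\emptyset$, $p_S$ is the unique root of smallest modulus of $\mu_S$ (real, $0<p_S\leqslant1$); $p_\emptyset=+\infty$. For $p\in(0,p_S)$, $\sum_{x\in\mathcal{M}_S}p^{|x|}=1/\mu_S(p)<\infty$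 and $B_{S,p}$ is the probability distribution on $\mathcal{M}_S$ with $B_{S,p}(\{x\})=\mu_S(p)p^{|x|}$. *)

theory Defs
  imports "HOL-Analysis.Analysis"
begin

text \<open>Traces are represented as equivalence classes of words (lists) under the
congruence generated by swapping adjacent independent letters, i.e. letters
a, b with (a,b) not in the dependence relation R.\<close>

definition swap_step :: "('a \<times> 'a) set \<Rightarrow> 'a list \<Rightarrow> 'a list \<Rightarrow> bool" where
  "swap_step R u v \<longleftrightarrow> (\<exists>x y a b. (a, b) \<notin> R \<and> u = x @ [a, b] @ y \<and> v = x @ [b, a] @ y)"

definition trace_eq :: "('a \<times> 'a) set \<Rightarrow> 'a list \<Rightarrow> 'a list \<Rightarrow> bool" where
  "trace_eq R = equivclp (swap_step R)"

definition trace_class :: "('a \<times> 'a) set \<Rightarrow> 'a list \<Rightarrow> 'a list set" where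
  "trace_class R w = {v. trace_eq R w v}"

definition traces :: "('a \<times> 'a) set \<Rightarrow> 'a set \<Rightarrow> 'a list set set" where
  "traces R S = {trace_class R w | w. set w \<subseteq> S}"

text \<open>Length of a trace (all representatives have the same length).\<close>
definition tlen :: "'a list set \<Rightarrow> nat" where
  "tlen x = length (SOME w. w \<in> x)"

definition tmax :: "('a \<times> 'a) set \<Rightarrow> 'a list set \<Rightarrow> 'a set" where
  "tmax R x = {a. \<exists>w. trace_class R (w @ [a]) = x}"

definition Lnb :: "('a \<times> 'a) set \<Rightarrow> 'a set \<Rightarrow> 'a \<Rightarrow> 'a set" where
  "Lnb R Sig a = {b \<in> Sig. (a, b) \<in> R}"

definition Pyr :: "('a \<times> 'a) set \<Rightarrow> 'a set \<Rightarrow> 'a \<Rightarrow> 'a list set set" where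
  "Pyr R Sig a1 = {trace_class R (w @ [a1]) | w.
      set w \<subseteq> Sig - {a1} \<and> tmax R (trace_class R w) \<subseteq> Lnb R Sig a1}"

definition is_clique :: "('a \<times> 'a) set \<Rightarrow> 'a set \<Rightarrow> 'a set \<Rightarrow> bool" where
  "is_clique R S \<gamma> \<longleftrightarrow> \<gamma> \<subseteq> S \<and> (\<forall>a\<in>\<gamma>. \<forall>b\<in>\<gamma>. a \<noteq> b \<longrightarrow> (a, b) \<notin> R)"

definition mu :: "('a \<times> 'a) set \<Rightarrow> 'a set \<Rightarrow> 'b::comm_ring_1 \<Rightarrow> 'b" where
  "mu R S X = (\<Sum>\<gamma> \<in> {\<gamma>. is_clique R S \<gamma>}. (-1) ^ card \<gamma> * X ^ card \<gamma>)"

text \<open>p_S: modulus of a root of smallest modulus of mu_S (meaningful for S nonempty).\<close>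
definition p_root :: "('a \<times> 'a) set \<Rightarrow> 'a set \<Rightarrow> real" where
  "p_root R S = Inf {norm z | z :: complex. mu R S z = 0}"

definition Bdist :: "('a \<times> 'a) set \<Rightarrow> 'a set \<Rightarrow> real \<Rightarrow> 'a list set set \<Rightarrow> real" where
  "Bdist R S p A = (\<Sum>\<^sub>\<infinity> x \<in> A. mu R S p * p ^ tlen x)"

end

theory Submission
  imports Defs "HOL-Complex_Analysis.Complex_Analysis"
begin

lemma equivclp_invariant:
  assumes "equivclp r u v" "\<And>u v. r u v \<Longrightarrow> f u = f v"
  shows "f u = f v"
  using assms(1) unfolding equivclp_def
proof (induction rule: rtranclp_induct)
  case base then show ?case by simp
next
  case (step y z) then show ?case using assms(2) by (auto simp: symclp_def)
qed

lemma equivclp_map: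
  assumes "equivclp r u v" "\<And>u v. r u v \<Longrightarrow> f u = f v \<or> r (f u) (f v)"
  shows "equivclp r (f u) (f v)"
  using assms(1) unfolding equivclp_def
proof (induction rule: rtranclp_induct)
  case base then show ?case by simp
next
  case (step y z)
  have "symclp r y z" by fact
  then have "f y = f z \<or> symclp r (f y) (f z)" using assms(2)[of y z] assms(2)[of z y]
    by (auto simp: symclp_def)
  then show ?case using step.IH
    by (metis rtranclp.rtrancl_into_rtrancl)
qed

lemma teq_refl[simp]: "trace_eq R u u"
  by (simp add: trace_eq_def)

lemma teq_sym: "trace_eq R u v \<Longrightarrow> trace_eq R v u"
  by (simp add: trace_eq_def equivclp_sym)

lemma teq_trans: "trace_eq R u v \<Longrightarrow> trace_eq R v w \<Longrightarrow> trace_eq R u w"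
  unfolding trace_eq_def by (meson transpD transp_equivclp)

lemma swap_teq: "(a, b) \<notin> R \<Longrightarrow> trace_eq R (x @ [a, b] @ y) (x @ [b, a] @ y)"
  unfolding trace_eq_def by (rule r_into_equivclp) (unfold swap_step_def, blast)

lemma teq_length: "trace_eq R u v \<Longrightarrow> length u = length v"
  unfolding trace_eq_def by (erule equivclp_invariant) (auto simp: swap_step_def)

lemma teq_set: "trace_eq R u v \<Longrightarrow> set u = set v"
  unfolding trace_eq_def by (erule equivclp_invariant) (auto simp: swap_step_def)

lemma teq_append_cong:
  assumes "trace_eq R u u'" "trace_eq R v v'"
  shows "trace_eq R (x @ u @ y) (x @ u' @ y)"
proof -
  have "equivclp (swap_step R) ((\<lambda>w. x @ w @ y) u) ((\<lambda>w. x @ w @ y) u')"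
    using assms(1) unfolding trace_eq_def
  proof (rule equivclp_map)
    fix u v assume "swap_step R u v"
    then obtain x' y' a b where "(a, b) \<notin> R" "u = x' @ [a, b] @ y'" "v = x' @ [b, a] @ y'"
      by (auto simp: swap_step_def)
    then have "swap_step R (x @ u @ y) (x @ v @ y)"
      unfolding swap_step_def by (intro exI[of _ "x @ x'"] exI[of _ "y' @ y"] exI[of _ a] exI[of _ b]) simp
    then show "x @ u @ y = x @ v @ y \<or> swap_step R (x @ u @ y) (x @ v @ y)" by blast
  qed
  then show ?thesis by (simp add: trace_eq_def)
qed

lemma teq_append:
  assumes "trace_eq R u u'" "trace_eq R v v'"
  shows "trace_eq R (u @ v) (u' @ v')"
proof -
  have "trace_eq R ([] @ u @ v) ([] @ u' @ v)" by (rule teq_append_cong[OF assms(1) assms(1)])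
  moreover have "trace_eq R (u' @ v @ []) (u' @ v' @ [])" by (rule teq_append_cong[OF assms(2) assms(2)])
  ultimately show ?thesis by (auto intro: teq_trans)
qed

fun dl :: "'a \<Rightarrow> 'a list \<Rightarrow> 'a list" where
  "dl a [] = []"
| "dl a (x # xs) = (if a \<in> set xs then x # dl a xs else if x = a then xs else x # xs)"

lemma dl_notin: "a \<notin> set u \<Longrightarrow> dl a u = u"
  by (induction u) auto

lemma dl_append: "dl a (u @ v) = (if a \<in> set v then u @ dl a v else dl a u @ v)"
  by (induction u) (auto simp: dl_notin)

lemma dl_snoc[simp]: "dl a (u @ [a]) = u"
  by (simp add: dl_append)

lemma dl_snoc_other[simp]: "b \<noteq> a \<Longrightarrow> dl a (u @ [b]) = dl a u @ [b]"
  by (simp add: dl_append)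


lemma dl_swap: "swap_step R u v \<Longrightarrow> dl a u = dl a v \<or> swap_step R (dl a u) (dl a v)"
proof -
  assume "swap_step R u v"
  then obtain x y c d where cd: "(c, d) \<notin> R" "u = x @ [c, d] @ y" "v = x @ [d, c] @ y"
    by (auto simp: swap_step_def)
  show ?thesis
  proof (cases "a \<in> set y")
    case True
    then show ?thesis using cd by (auto simp: dl_append swap_step_def)
  next
    case False
    show ?thesis
    proof (cases "c = d")
      case True then show ?thesis using cd by simp
    next
      case cne: False
      show ?thesis
      proof (cases "a = c \<or> a = d")
        case True then show ?thesis using cd False cne
          by (auto simp: dl_append)
      next
        case False': False
        then have "dl a u = dl a x @ [c, d] @ y" "dl a v = dl a x @ [d, c] @ y"
          using cd False by (auto simp: dl_append)
        then show ?thesis using cd by (auto simp: swap_step_def)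
      qed
    qed
  qed
qed

lemma teq_dl: "trace_eq R u v \<Longrightarrow> trace_eq R (dl a u) (dl a v)"
  unfolding trace_eq_def by (erule equivclp_map) (rule dl_swap)

lemma teq_cancel: "trace_eq R (u @ [a]) (v @ [a]) \<Longrightarrow> trace_eq R u v"
  using teq_dl[of R "u @ [a]" "v @ [a]" a] by simp

lemma teq_cancel_list: "trace_eq R (u @ w) (v @ w) \<Longrightarrow> trace_eq R u v"
proof (induction w arbitrary: u v rule: rev_induct)
  case Nil then show ?case by simp
next
  case (snoc x xs) then show ?case using teq_cancel[of R "u @ xs" x "v @ xs"] by simp
qed

lemma teq_proj:
  assumes "sym R" "(a, b) \<in> R" "trace_eq R u v"
  shows "filter (\<lambda>c. c = a \<or> c = b) u = filter (\<lambda>c. c = a \<or> c = b) v"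
  using assms(3) unfolding trace_eq_def
proof (rule equivclp_invariant)
  fix u v assume "swap_step R u v"
  then obtain x y c d where cd: "(c, d) \<notin> R" "u = x @ [c, d] @ y" "v = x @ [d, c] @ y"
    by (auto simp: swap_step_def)
  have "\<not> ((c = a \<or> c = b) \<and> (d = a \<or> d = b) \<and> c \<noteq> d)"
    using assms(1,2) cd(1) unfolding sym_def by blast
  then show "filter (\<lambda>c. c = a \<or> c = b) u = filter (\<lambda>c. c = a \<or> c = b) v"
    using cd by auto
qed

lemma levi:
  assumes "sym R" "a \<noteq> b" "trace_eq R (y @ [a]) (z @ [b])"
  shows "(a, b) \<notin> R \<and> trace_eq R y (dl b y @ [b]) \<and> trace_eq R z (dl b y @ [a])"
proof (intro conjI)
  show "(a, b) \<notin> R"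
  proof
    assume "(a, b) \<in> R"
    from arg_cong[OF teq_proj[OF assms(1) this assms(3)], of last]
    have "last (filter (\<lambda>c. c = a \<or> c = b) (y @ [a])) = last (filter (\<lambda>c. c = a \<or> c = b) (z @ [b]))"
      .
    then show False using assms(2) by simp
  qed
  have 1: "trace_eq R (dl b (y @ [a])) (dl b (z @ [b]))" by (rule teq_dl[OF assms(3)])
  then have z: "trace_eq R (dl b y @ [a]) z" using assms(2) not_sym[OF assms(2)] by simp
  then show "trace_eq R z (dl b y @ [a])" by (rule teq_sym)
  have "trace_eq R (dl a (y @ [a])) (dl a (z @ [b]))" by (rule teq_dl[OF assms(3)])
  then have y: "trace_eq R y (dl a z @ [b])" using assms(2) not_sym[OF assms(2)] by simp
  have "trace_eq R (dl a z) (dl a (dl b y @ [a]))" by (rule teq_dl[OF teq_sym[OF z]])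
  then have "trace_eq R (dl a z) (dl b y)" by simp
  then have "trace_eq R (dl a z @ [b]) (dl b y @ [b])" by (rule teq_append[OF _ teq_refl])
  with y show "trace_eq R y (dl b y @ [b])" by (rule teq_trans)
qed


lemma tcl_eq: "trace_class R u = trace_class R v \<longleftrightarrow> trace_eq R u v"
proof
  assume "trace_class R u = trace_class R v"
  then have "v \<in> trace_class R u" by (simp add: trace_class_def)
  then show "trace_eq R u v" by (simp add: trace_class_def)
next
  assume "trace_eq R u v"
  then show "trace_class R u = trace_class R v"
    by (auto simp: trace_class_def intro: teq_trans teq_sym)
qed

lemma tcl_mem: "w \<in> trace_class R w"
  by (simp add: trace_class_def)

lemma tlen_tcl[simp]: "tlen (trace_class R w) = length w"
proof -
  have "(SOME v. v \<in> trace_class R w) \<in> trace_class R w" by (rule someI, rule tcl_mem)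
  then show ?thesis unfolding tlen_def by (simp add: trace_class_def teq_length)
qed

lemma tmax_tcl: "tmax R (trace_class R w) = {a. \<exists>u. trace_eq R (u @ [a]) w}"
  by (simp add: tmax_def tcl_eq)

lemma teq_move:
  assumes "\<forall>c\<in>set ys. (a, c) \<notin> R"
  shows "trace_eq R (xs @ [a] @ ys) (xs @ ys @ [a])"
  using assms
proof (induction ys arbitrary: xs)
  case Nil then show ?case by simp
next
  case (Cons c ys)
  have 1: "trace_eq R (xs @ [a, c] @ ys) (xs @ [c, a] @ ys)" using Cons.prems by (intro swap_teq) simp
  have 2: "trace_eq R ((xs @ [c]) @ [a] @ ys) ((xs @ [c]) @ ys @ [a])" using Cons.IH[of "xs @ [c]"] Cons.prems by simp
  show ?case using teq_trans[OF 1] 2 by simp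
qed

definition indep_set :: "('a \<times> 'a) set \<Rightarrow> 'a set \<Rightarrow> bool" where
  "indep_set R A \<longleftrightarrow> (\<forall>a\<in>A. \<forall>b\<in>A. a \<noteq> b \<longrightarrow> (a, b) \<notin> R)"

lemma teq_perm:
  assumes "distinct l1" "distinct l2" "set l1 = set l2" "indep_set R (set l1)"
  shows "trace_eq R l1 l2"
  using assms
proof (induction l2 arbitrary: l1 rule: rev_induct)
  case Nil then show ?case by simp
next
  case (snoc a l2)
  then have "a \<in> set l1" by simp
  then obtain xs ys where l1: "l1 = xs @ [a] @ ys" by (metis append_Cons append_Nil in_set_conv_decomp)
  have ind: "\<forall>c\<in>set ys. (a, c) \<notin> R"
    using snoc.prems l1 unfolding indep_set_def by auto
  have 1: "trace_eq R l1 ((xs @ ys) @ [a])" using teq_move[OF ind] l1 by simp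
  have sub: "set (xs @ ys) \<subseteq> set l1" using l1 by auto
  have "trace_eq R (xs @ ys) l2"
    apply (rule snoc.IH)
    using snoc.prems(1,2,3) l1 apply auto[3]
    using snoc.prems(4) sub unfolding indep_set_def by blast
  then have "trace_eq R ((xs @ ys) @ [a]) (l2 @ [a])" by (rule teq_append[OF _ teq_refl])
  with 1 show ?case by (rule teq_trans)
qed

lemma max_concat:
  assumes "sym R" "trace_eq R (x @ y) (t @ [b])"
  shows "(\<exists>y'. trace_eq R y (y' @ [b])) \<or> (\<exists>x'. trace_eq R x (x' @ [b]))"
  using assms(2)
proof (induction y arbitrary: t rule: rev_induct)
  case Nil then show ?case by auto
next
  case (snoc c y0)
  show ?case
  proof (cases "c = b")
    case True then show ?thesis by (intro disjI1 exI[of _ y0]) simp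
  next
    case False
    have "trace_eq R ((x @ y0) @ [c]) (t @ [b])" using snoc.prems by simp
    from levi[OF assms(1) False this]
    have cb: "(c, b) \<notin> R" and h: "trace_eq R (x @ y0) (dl b (x @ y0) @ [b])" by auto
    from snoc.IH[OF h] show ?thesis
    proof
      assume "\<exists>y'. trace_eq R y0 (y' @ [b])"
      then obtain y' where y': "trace_eq R y0 (y' @ [b])" by blast
      have "trace_eq R (y0 @ [c]) (y' @ [b] @ [c])" using teq_append[OF y' teq_refl] by simp
      moreover have "trace_eq R (y' @ [b, c] @ []) (y' @ [c, b] @ [])"
        using cb assms(1) by (intro swap_teq) (auto dest: symD)
      ultimately have "trace_eq R (y0 @ [c]) ((y' @ [c]) @ [b])" by (auto intro: teq_trans)
      then show ?thesis by blast
    qed auto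
  qed
qed

definition enumS :: "'a set \<Rightarrow> 'a list" where
  "enumS A = (SOME l. distinct l \<and> set l = A)"

lemma enumS: "finite A \<Longrightarrow> distinct (enumS A) \<and> set (enumS A) = A"
  unfolding enumS_def by (rule someI_ex) (metis finite_distinct_list)

lemma max_indep:
  assumes "sym R" "trace_eq R (u @ [a]) w" "trace_eq R (v @ [b]) w" "a \<noteq> b"
  shows "(a, b) \<notin> R"
  using levi[OF assms(1,4) teq_trans[OF assms(2) teq_sym[OF assms(3)]]] by blast

lemma max_decomp:
  fixes w :: "'a list"
  assumes "sym R" "finite G" "G \<subseteq> {a. \<exists>u. trace_eq R (u @ [a]) w}"
  shows "\<exists>x. trace_eq R (x @ enumS G) w"
  using assms(2,3)
proof (induction G rule: finite_induct)
  case empty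
  have "enumS ({}::'a set) = []" using enumS[of "{}::'a set"] by simp
  then show ?case by (intro exI[of _ w]) simp
next
  case (insert a F)
  then obtain x where x: "trace_eq R (x @ enumS F) w" by auto
  from insert.prems obtain u where u: "trace_eq R (u @ [a]) w" by auto
  have "trace_eq R (x @ enumS F) (u @ [a])" by (rule teq_trans[OF x teq_sym[OF u]])
  from max_concat[OF assms(1) this] obtain x' where x': "trace_eq R x (x' @ [a])"
  proof
    assume "\<exists>y'. trace_eq R (enumS F) (y' @ [a])"
    then obtain y' where "trace_eq R (enumS F) (y' @ [a])" by blast
    then have "a \<in> set (enumS F)" using teq_set by fastforce
    then show ?thesis using enumS[OF insert.hyps(1)] insert.hyps(2) by simp
  qed auto
  have ind: "\<forall>c\<in>set (enumS F). (a, c) \<notin> R"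
  proof
    fix c assume "c \<in> set (enumS F)"
    then have c: "c \<in> F" using enumS[OF insert.hyps(1)] by simp
    with insert.prems obtain v where "trace_eq R (v @ [c]) w" by auto
    moreover have "a \<noteq> c" using c insert.hyps(2) by auto
    ultimately show "(a, c) \<notin> R" using max_indep[OF assms(1) u] by blast
  qed
  have indep: "indep_set R (insert a F)"
    unfolding indep_set_def
  proof (intro ballI impI)
    fix c d assume "c \<in> insert a F" "d \<in> insert a F" "c \<noteq> d"
    then obtain v1 v2 where "trace_eq R (v1 @ [c]) w" "trace_eq R (v2 @ [d]) w" using insert.prems by blast
    then show "(c, d) \<notin> R" using max_indep[OF assms(1)] \<open>c \<noteq> d\<close> by blast
  qed
  have 1: "trace_eq R (x' @ [a] @ enumS F) (x' @ enumS F @ [a])" by (rule teq_move[OF ind])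
  have 2: "trace_eq R (enumS F @ [a]) (enumS (insert a F))"
    apply (rule teq_perm)
    using enumS[OF insert.hyps(1)] enumS[of "insert a F"] insert.hyps indep by auto
  have 3: "trace_eq R (x' @ enumS (insert a F)) (x' @ [a] @ enumS F)"
    using teq_sym[OF teq_trans[OF 1 teq_append[OF teq_refl 2]]] .
  have 4: "trace_eq R (x' @ [a] @ enumS F) (x @ enumS F)" using teq_append[OF teq_sym[OF x'] teq_refl] by simp
  show ?case using teq_trans[OF teq_trans[OF 3 4] x] by blast
qed


definition T :: "('a \<times> 'a) set \<Rightarrow> 'a set \<Rightarrow> nat \<Rightarrow> 'a list set set" where
  "T R S n = {trace_class R w | w. set w \<subseteq> S \<and> length w = n}"

definition cnt :: "('a \<times> 'a) set \<Rightarrow> 'a set \<Rightarrow> nat \<Rightarrow> nat" where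
  "cnt R S n = card (T R S n)"

definition tc :: "('a \<times> 'a) set \<Rightarrow> 'a list set \<Rightarrow> 'a list set \<Rightarrow> 'a list set" where
  "tc R x y = trace_class R ((SOME w. w \<in> x) @ (SOME w. w \<in> y))"

lemma some_tcl: "trace_eq R u (SOME w. w \<in> trace_class R u)"
proof -
  have "(SOME w. w \<in> trace_class R u) \<in> trace_class R u" by (rule someI, rule tcl_mem)
  then show ?thesis by (simp add: trace_class_def)
qed

lemma tc_tcl: "tc R (trace_class R u) (trace_class R v) = trace_class R (u @ v)"
  unfolding tc_def tcl_eq
  by (rule teq_sym, rule teq_append[OF some_tcl some_tcl])

lemma T_finite: "finite S \<Longrightarrow> finite (T R S n)"
proof -
  assume "finite S"
  have "T R S n = trace_class R ` {w. set w \<subseteq> S \<and> length w = n}" by (auto simp: T_def)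
  then show ?thesis using finite_lists_length_eq[OF \<open>finite S\<close>] by simp
qed

lemma T_zero: "T R S 0 = {trace_class R []}"
  by (auto simp: T_def)

lemma T_mono: "S \<subseteq> S' \<Longrightarrow> T R S n \<subseteq> T R S' n"
  by (auto simp: T_def)

lemma pow_alt_sum:
  assumes "finite A" "A \<noteq> {}"
  shows "(\<Sum>B\<in>Pow A. (-1::int) ^ card B) = 0"
proof -
  obtain a where a: "a \<in> A" using assms(2) by blast
  let ?A = "A - {a}"
  have fin: "finite ?A" using assms(1) by simp
  have "Pow A = Pow ?A \<union> insert a ` Pow ?A"
    using a by (metis Pow_insert insert_Diff)
  moreover have "Pow ?A \<inter> insert a ` Pow ?A = {}" by auto
  ultimately have "(\<Sum>B\<in>Pow A. (-1::int) ^ card B) =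
      (\<Sum>B\<in>Pow ?A. (-1::int) ^ card B) + (\<Sum>B\<in>insert a ` Pow ?A. (-1::int) ^ card B)"
    using fin by (simp add: sum.union_disjoint)
  also have "(\<Sum>B\<in>insert a ` Pow ?A. (-1::int) ^ card B) = (\<Sum>B\<in>Pow ?A. (-1::int) ^ card (insert a B))"
    by (rule sum.reindex_cong[where l="insert a"]) (auto simp: inj_on_def)
  also have "\<dots> = (\<Sum>B\<in>Pow ?A. - ((-1::int) ^ card B))"
  proof (rule sum.cong)
    fix B assume "B \<in> Pow ?A"
    then have "a \<notin> B" "finite B" using fin by (auto intro: finite_subset)
    then show "(-1::int) ^ card (insert a B) = - ((-1) ^ card B)" by simp
  qed simp
  finally show ?thesis by (simp add: sum_negf)
qed

lemma clique_fin: "finite S \<Longrightarrow> finite {\<gamma>. is_clique R S \<gamma>}"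
  by (rule finite_subset[of _ "Pow S"]) (auto simp: is_clique_def)

lemma clique_indep: "is_clique R S g \<Longrightarrow> indep_set R g"
  by (auto simp: is_clique_def indep_set_def)

lemma clique_max:
  assumes "sym R" "finite g" "indep_set R g" "a \<in> g" "trace_eq R (u @ enumS g) w"
  shows "\<exists>v. trace_eq R (v @ [a]) w"
proof -
  have "trace_eq R (enumS (g - {a}) @ [a]) (enumS g)"
    apply (rule teq_perm)
    using enumS[of "g - {a}"] enumS[of g] assms(2,3,4) by (auto simp: indep_set_def)
  then have "trace_eq R ((u @ enumS (g - {a})) @ [a]) (u @ enumS g)"
    using teq_append[OF teq_refl] by simp
  then show ?thesis using assms(5) by (blast intro: teq_trans)
qed

lemma mobius:
  fixes R :: "('a \<times> 'a) set"
  assumes "finite S" "sym R"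
  shows "(\<Sum>g\<in>{\<gamma>. is_clique R S \<gamma>}. if card g \<le> n then (-1)^card g * int (cnt R S (n - card g)) else 0)
         = (if n = 0 then 1 else (0::int))"
proof (cases "n = 0")
  case True
  have e: "({}::'a set) \<in> {\<gamma>. is_clique R S \<gamma>}" by (simp add: is_clique_def)
  have "(\<Sum>g\<in>{\<gamma>. is_clique R S \<gamma>}. if card g \<le> n then (-1)^card g * int (cnt R S (n - card g)) else (0::int))
      = (\<Sum>g\<in>{{}::'a set}. if card g \<le> n then (-1)^card g * int (cnt R S (n - card g)) else (0::int))"
  proof (rule sum.mono_neutral_right)
    show "finite {\<gamma>. is_clique R S \<gamma>}" by (rule clique_fin[OF assms(1)])
    show "{{}::'a set} \<subseteq> {\<gamma>. is_clique R S \<gamma>}" using e by simp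
    show "\<forall>g\<in>{\<gamma>. is_clique R S \<gamma>} - {{}::'a set}. (if card g \<le> n then (-1)^card g * int (cnt R S (n - card g)) else (0::int)) = 0"
    proof
      fix g assume "g \<in> {\<gamma>. is_clique R S \<gamma>} - {{}::'a set}"
      then have "finite g" "g \<noteq> {}" using assms(1) by (auto simp: is_clique_def intro: finite_subset)
      then have "card g > 0" by (simp add: card_gt_0_iff)
      then show "(if card g \<le> n then (-1)^card g * int (cnt R S (n - card g)) else (0::int)) = 0" using True by simp
    qed
  qed
  also have "\<dots> = 1" using True by (simp add: cnt_def T_zero)
  finally show ?thesis using True by simp
next
  case False
  define Cl where "Cl = {g\<in>{\<gamma>. is_clique R S \<gamma>}. card g \<le> n}"
  define P where "P = Sigma Cl (\<lambda>g. T R S (n - card g))"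
  define h where "h = (\<lambda>q. tc R (snd q) (trace_class R (enumS (fst q))))"
  have finCl: "finite Cl" unfolding Cl_def using clique_fin[OF assms(1)] by simp
  have finP: "finite P" unfolding P_def using finCl T_finite[OF assms(1)] by simp
  have "(\<Sum>g\<in>{\<gamma>. is_clique R S \<gamma>}. if card g \<le> n then (-1)^card g * int (cnt R S (n - card g)) else 0)
      = (\<Sum>g\<in>Cl. (-1)^card g * int (cnt R S (n - card g)))"
    unfolding Cl_def by (rule sum.inter_filter[OF clique_fin[OF assms(1)], symmetric])
  also have "\<dots> = (\<Sum>g\<in>Cl. \<Sum>x\<in>T R S (n - card g). (-1::int)^card g)"
    by (simp add: cnt_def mult.commute)
  also have "\<dots> = (\<Sum>q\<in>P. (-1::int)^card (fst q))"
    unfolding P_def using finCl T_finite[OF assms(1)] by (subst sum.Sigma) (auto simp: case_prod_beta)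
  also have "\<dots> = (\<Sum>t\<in>T R S n. \<Sum>q\<in>{q. q \<in> P \<and> h q = t}. (-1::int)^card (fst q))"
  proof (rule sum.group[symmetric, OF finP T_finite[OF assms(1)]])
    show "h ` P \<subseteq> T R S n"
    proof
      fix t assume "t \<in> h ` P"
      then obtain g w where g: "g \<in> Cl" "set w \<subseteq> S" "length w = n - card g"
          and t: "t = h (g, trace_class R w)"
        unfolding P_def T_def by auto
      have fg: "finite g" "g \<subseteq> S" "card g \<le> n"
        using g(1) assms(1) unfolding Cl_def is_clique_def by (auto intro: finite_subset)
      have "t = trace_class R (w @ enumS g)" unfolding t h_def by (simp add: tc_tcl)
      moreover have "set (w @ enumS g) \<subseteq> S" using g enumS[OF fg(1)] fg by auto
      moreover have "length (w @ enumS g) = n" using g(3) enumS[OF fg(1)] fg(3)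
          distinct_card[of "enumS g"] by simp
      ultimately show "t \<in> T R S n" unfolding T_def by blast
    qed
  qed
  also have "\<dots> = (\<Sum>t\<in>T R S n. 0)"
  proof (rule sum.cong[OF refl])
    fix t assume "t \<in> T R S n"
    then obtain w0 where w0: "t = trace_class R w0" "set w0 \<subseteq> S" "length w0 = n" unfolding T_def by auto
    have mx: "tmax R t = {a. \<exists>u. trace_eq R (u @ [a]) w0}" using w0(1) tmax_tcl by simp
    have mxS: "tmax R t \<subseteq> set w0" unfolding mx using teq_set by fastforce
    have bij: "bij_betw fst {q. q \<in> P \<and> h q = t} (Pow (tmax R t))"
      unfolding bij_betw_def
    proof (intro conjI)
      show "inj_on fst {q. q \<in> P \<and> h q = t}"
      proof (rule inj_onI)
        fix q q' assume q: "q \<in> {q. q \<in> P \<and> h q = t}" and q': "q' \<in> {q. q \<in> P \<and> h q = t}"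
          and f: "fst q = fst q'"
        obtain g x where qq: "q = (g, x)" by (cases q)
        obtain x' where qq': "q' = (g, x')" using f qq by (cases q') auto
        obtain u u' where x: "x = trace_class R u" and x': "x' = trace_class R u'"
          using q q' qq qq' unfolding P_def T_def by auto
        have "trace_class R (u @ enumS g) = trace_class R (u' @ enumS g)"
          using q q' qq qq' x x' unfolding h_def by (simp add: tc_tcl)
        then have "trace_eq R u u'" unfolding tcl_eq by (rule teq_cancel_list)
        then show "q = q'" using qq qq' x x' tcl_eq by metis
      qed
      show "fst ` {q. q \<in> P \<and> h q = t} = Pow (tmax R t)"
      proof
        show "fst ` {q. q \<in> P \<and> h q = t} \<subseteq> Pow (tmax R t)"
        proof
          fix g assume "g \<in> fst ` {q. q \<in> P \<and> h q = t}"
          then obtain u where g: "g \<in> Cl" "trace_class R (u @ enumS g) = t"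
            unfolding P_def T_def h_def by (auto simp: tc_tcl)
          have fg: "finite g" "indep_set R g"
            using g(1) assms(1) unfolding Cl_def by (auto intro: finite_subset clique_indep simp: is_clique_def)
          have ue: "trace_eq R (u @ enumS g) w0" using g(2) w0(1) tcl_eq by metis
          show "g \<in> Pow (tmax R t)"
            using clique_max[OF assms(2) fg _ ue] unfolding mx by blast
        qed
        show "Pow (tmax R t) \<subseteq> fst ` {q. q \<in> P \<and> h q = t}"
        proof
          fix g assume "g \<in> Pow (tmax R t)"
          then have gs: "g \<subseteq> {a. \<exists>u. trace_eq R (u @ [a]) w0}" using mx by simp
          have fg: "finite g" using mxS \<open>g \<in> Pow (tmax R t)\<close> by (auto intro: finite_subset)
          obtain x where x: "trace_eq R (x @ enumS g) w0" using max_decomp[OF assms(2) fg gs] by blast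
          have gS: "g \<subseteq> S" using gs w0(2) teq_set by fastforce
          have cl: "is_clique R S g" unfolding is_clique_def
          proof (intro conjI gS ballI impI)
            fix a b assume "a \<in> g" "b \<in> g" "a \<noteq> b"
            then show "(a, b) \<notin> R" using gs max_indep[OF assms(2)] by blast
          qed
          have len: "length x + card g = n" using teq_length[OF x] w0(3) enumS[OF fg]
            distinct_card[of "enumS g"] by simp
          have xS: "set x \<subseteq> S" using teq_set[OF x] w0(2) by auto
          have "(g, trace_class R x) \<in> P" unfolding P_def Cl_def T_def using cl len xS by auto
          moreover have "h (g, trace_class R x) = t" unfolding h_def using x w0(1) by (simp add: tc_tcl tcl_eq)
          ultimately show "g \<in> fst ` {q. q \<in> P \<and> h q = t}" by force
        qed
      qed
    qed
    have "(\<Sum>q\<in>{q. q \<in> P \<and> h q = t}. (-1::int)^card (fst q)) = (\<Sum>g\<in>Pow (tmax R t). (-1::int)^card g)"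
      by (rule sum.reindex_bij_betw[OF bij])
    also have "\<dots> = 0"
    proof (rule pow_alt_sum)
      show "finite (tmax R t)" using mxS finite_subset by blast
      have "w0 \<noteq> []" using w0(3) False by auto
      then have "w0 = butlast w0 @ [last w0]" by simp
      then have "last w0 \<in> tmax R t" unfolding mx by (metis (mono_tags) mem_Collect_eq teq_refl)
      then show "tmax R t \<noteq> {}" by blast
    qed
    finally show "(\<Sum>q\<in>{q. q \<in> P \<and> h q = t}. (-1::int)^card (fst q)) = 0" .
  qed
  finally show ?thesis using False by simp
qed


abbreviation mx :: "('a \<times> 'a) set \<Rightarrow> 'a list \<Rightarrow> 'a set" where
  "mx R w \<equiv> {a. \<exists>u. trace_eq R (u @ [a]) w}"

lemma mx_teq: "trace_eq R w w' \<Longrightarrow> mx R w = mx R w'"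
  by (auto intro: teq_trans dest: teq_sym)

lemma decomp_unique:
  assumes "sym R"
  shows "set v \<subseteq> B \<Longrightarrow> set v' \<subseteq> B \<Longrightarrow> mx R z \<inter> B = {} \<Longrightarrow> mx R z' \<inter> B = {}
     \<Longrightarrow> trace_eq R (z @ v) (z' @ v') \<Longrightarrow> trace_eq R z z' \<and> trace_eq R v v'"
proof (induction "length v + length v'" arbitrary: z v z' v' rule: less_induct)
  case less
  show ?case
  proof (cases "v = [] \<and> v' = []")
    case True then show ?thesis using less.prems by simp
  next
    case False
    show ?thesis
    proof (cases "v = []")
      case vne: False
      then obtain v0 b where v: "v = v0 @ [b]" by (metis rev_exhaust)
      have bB: "b \<in> B" using less.prems(1) v by auto
      have "trace_eq R (z' @ v') ((z @ v0) @ [b])" using less.prems(5) v by (simp add: teq_sym)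
      from max_concat[OF assms this] show ?thesis
      proof
        assume "\<exists>y'. trace_eq R v' (y' @ [b])"
        then obtain y' where y': "trace_eq R v' (y' @ [b])" by blast
        have "trace_eq R ((z @ v0) @ [b]) ((z' @ y') @ [b])"
          using teq_trans[OF less.prems(5) teq_append[OF teq_refl y']] v by simp
        then have e: "trace_eq R (z @ v0) (z' @ y')" by (rule teq_cancel)
        have ly: "length y' < length v'" using teq_length[OF y'] by simp
        have sy: "set y' \<subseteq> B" using teq_set[OF y'] less.prems(2) by auto
        have "trace_eq R z z' \<and> trace_eq R v0 y'"
          using less.hyps[of v0 y' z z'] v ly sy less.prems(1,3,4) e by auto
        then have "trace_eq R (v0 @ [b]) (y' @ [b])" using teq_append[OF _ teq_refl] by blast
        then have "trace_eq R v v'" using teq_trans[OF _ teq_sym[OF y']] v by blast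
        then show ?thesis using \<open>trace_eq R z z' \<and> trace_eq R v0 y'\<close> by blast
      next
        assume "\<exists>x'. trace_eq R z' (x' @ [b])"
        then have "b \<in> mx R z'" by (auto intro: teq_sym)
        then show ?thesis using bB less.prems(4) by auto
      qed
    next
      case ve: True
      then have vne: "v' \<noteq> []" using False by simp
      then obtain v0 b where v: "v' = v0 @ [b]" by (metis rev_exhaust)
      have bB: "b \<in> B" using less.prems(2) v by auto
      have "trace_eq R (z @ v) ((z' @ v0) @ [b])" using less.prems(5) v by simp
      from max_concat[OF assms this] show ?thesis
      proof
        assume "\<exists>y'. trace_eq R v (y' @ [b])"
        then show ?thesis using ve teq_length by fastforce
      next
        assume "\<exists>x'. trace_eq R z (x' @ [b])"
        then have "b \<in> mx R z" by (auto intro: teq_sym)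
        then show ?thesis using bB less.prems(3) by auto
      qed
    qed
  qed
qed

lemma decomp_exists:
  assumes "sym R"
  shows "set u \<subseteq> A \<Longrightarrow> \<exists>z v. set z \<subseteq> A \<and> mx R z \<subseteq> L \<and> set v \<subseteq> A - L \<and> trace_eq R (z @ v) u"
proof (induction "length u" arbitrary: u rule: less_induct)
  case less
  show ?case
  proof (cases "mx R u \<subseteq> L")
    case True then show ?thesis using less.prems by (intro exI[of _ u] exI[of _ "[]"]) auto
  next
    case False
    then obtain b u' where b: "b \<notin> L" "trace_eq R (u' @ [b]) u" by auto
    have lu: "length u' < length u" using teq_length[OF b(2)] by simp
    have su: "set u' \<subseteq> A" "b \<in> A" using teq_set[OF b(2)] less.prems by auto
    obtain z v where zv: "set z \<subseteq> A" "mx R z \<subseteq> L" "set v \<subseteq> A - L" "trace_eq R (z @ v) u'"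
      using less.hyps[OF lu su(1)] by blast
    have "trace_eq R (z @ v @ [b]) u"
      using teq_trans[OF teq_append[OF zv(4) teq_refl] b(2)] by simp
    then show ?thesis using zv su b by (intro exI[of _ z] exI[of _ "v @ [b]"]) auto
  qed
qed


definition Z :: "('a \<times> 'a) set \<Rightarrow> 'a set \<Rightarrow> 'a \<Rightarrow> nat \<Rightarrow> 'a list set set" where
  "Z R Sig a1 n = {trace_class R w | w. set w \<subseteq> Sig - {a1} \<and> length w = n \<and> tmax R (trace_class R w) \<subseteq> Lnb R Sig a1}"

lemma Z_sub: "Z R Sig a1 n \<subseteq> T R Sig n"
  by (auto simp: Z_def T_def)

lemma Z_fin: "finite Sig \<Longrightarrow> finite (Z R Sig a1 n)"
  using Z_sub T_finite finite_subset by metis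

lemma Pyr_0: "{x \<in> Pyr R Sig a1. tlen x = 0} = {}"
  by (auto simp: Pyr_def)

lemma Pyr_Suc: "card {x \<in> Pyr R Sig a1. tlen x = Suc n} = card (Z R Sig a1 n)"
proof -
  let ?f = "\<lambda>x. tc R x (trace_class R [a1])"
  have "?f ` Z R Sig a1 n = {x \<in> Pyr R Sig a1. tlen x = Suc n}"
  proof
    show "?f ` Z R Sig a1 n \<subseteq> {x \<in> Pyr R Sig a1. tlen x = Suc n}"
      by (auto simp: Z_def Pyr_def tc_tcl)
    show "{x \<in> Pyr R Sig a1. tlen x = Suc n} \<subseteq> ?f ` Z R Sig a1 n"
    proof
      fix x assume "x \<in> {x \<in> Pyr R Sig a1. tlen x = Suc n}"
      then obtain w where w: "x = trace_class R (w @ [a1])" "set w \<subseteq> Sig - {a1}"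
        "tmax R (trace_class R w) \<subseteq> Lnb R Sig a1" "length w = n" by (auto simp: Pyr_def)
      show "x \<in> ?f ` Z R Sig a1 n"
        by (rule image_eqI[where x="trace_class R w"]) (use w in \<open>auto simp: Z_def tc_tcl\<close>)
    qed
  qed
  moreover have "inj_on ?f (Z R Sig a1 n)"
  proof (rule inj_onI)
    fix x y assume "x \<in> Z R Sig a1 n" "y \<in> Z R Sig a1 n" "?f x = ?f y"
    then obtain u v where "x = trace_class R u" "y = trace_class R v"
      "trace_class R (u @ [a1]) = trace_class R (v @ [a1])" by (auto simp: Z_def tc_tcl)
    then show "x = y" by (simp add: tcl_eq teq_cancel)
  qed
  ultimately show ?thesis by (metis card_image)
qed

lemma conv_count:
  assumes "finite Sig" "sym R" "a1 \<in> Sig" "(a1, a1) \<in> R"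
  shows "card (T R (Sig - {a1}) n)
       = (\<Sum>k\<le>n. card (Z R Sig a1 k) * card (T R (Sig - Lnb R Sig a1) (n - k)))"
proof -
  let ?L = "Lnb R Sig a1"
  let ?S1 = "Sig - {a1}"
  let ?S2 = "Sig - ?L"
  have a1L: "a1 \<in> ?L" using assms by (simp add: Lnb_def)
  have S12: "?S1 - ?L = ?S2" using a1L by auto
  define D where "D = (SIGMA k:{..n}. Z R Sig a1 k \<times> T R ?S2 (n - k))"
  define f where "f = (\<lambda>q::nat \<times> 'a list set \<times> 'a list set. tc R (fst (snd q)) (snd (snd q)))"
  have bij: "bij_betw f D (T R ?S1 n)"
    unfolding bij_betw_def
  proof (intro conjI)
    show "inj_on f D"
    proof (rule inj_onI)
      fix q q' assume q: "q \<in> D" and q': "q' \<in> D" and e: "f q = f q'"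
      obtain k z v where qq: "q = (k, trace_class R z, trace_class R v)" "length z = k"
        "set v \<subseteq> ?S2" "mx R z \<subseteq> ?L"
        using q unfolding D_def Z_def T_def by (auto simp: tmax_tcl)
      obtain k' z' v' where qq': "q' = (k', trace_class R z', trace_class R v')" "length z' = k'"
        "set v' \<subseteq> ?S2" "mx R z' \<subseteq> ?L"
        using q' unfolding D_def Z_def T_def by (auto simp: tmax_tcl)
      have "trace_eq R (z @ v) (z' @ v')" using e qq qq' unfolding f_def by (simp add: tc_tcl tcl_eq)
      moreover have "mx R z \<inter> ?S2 = {}" "mx R z' \<inter> ?S2 = {}" using qq(4) qq'(4) by auto
      ultimately have "trace_eq R z z' \<and> trace_eq R v v'"
        using decomp_unique[OF assms(2) qq(3) qq'(3)] by blast
      then show "q = q'" using qq qq' by (auto simp: tcl_eq dest: teq_length)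
    qed
    show "f ` D = T R ?S1 n"
    proof
      show "f ` D \<subseteq> T R ?S1 n"
      proof
        fix t assume "t \<in> f ` D"
        then obtain k z v where "k \<le> n" "t = trace_class R (z @ v)" "length z = k" "set z \<subseteq> ?S1"
          "set v \<subseteq> ?S2" "length v = n - k"
          unfolding D_def Z_def T_def f_def by (auto simp: tc_tcl)
        then show "t \<in> T R ?S1 n" unfolding T_def using a1L by (intro CollectI exI[of _ "z @ v"]) auto
      qed
      show "T R ?S1 n \<subseteq> f ` D"
      proof
        fix t assume "t \<in> T R ?S1 n"
        then obtain u where u: "t = trace_class R u" "set u \<subseteq> ?S1" "length u = n" unfolding T_def by auto
        obtain z v where zv: "set z \<subseteq> ?S1" "mx R z \<subseteq> ?L" "set v \<subseteq> ?S1 - ?L" "trace_eq R (z @ v) u"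
          using decomp_exists[OF assms(2) u(2)] by blast
        have len: "length z + length v = n" using teq_length[OF zv(4)] u(3) by simp
        have "(length z, trace_class R z, trace_class R v) \<in> D"
          unfolding D_def Z_def T_def using zv len S12 by (auto simp: tmax_tcl)
        moreover have "f (length z, trace_class R z, trace_class R v) = t"
          unfolding f_def using zv(4) u(1) by (simp add: tc_tcl tcl_eq)
        ultimately show "t \<in> f ` D" by force
      qed
    qed
  qed
  have "card (T R ?S1 n) = card D" using bij_betw_same_card[OF bij] by simp
  also have "\<dots> = (\<Sum>k\<le>n. card (Z R Sig a1 k \<times> T R ?S2 (n - k)))"
    unfolding D_def by (rule card_SigmaI) (auto simp: Z_fin T_finite assms(1))
  also have "\<dots> = (\<Sum>k\<le>n. card (Z R Sig a1 k) * card (T R ?S2 (n - k)))"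
    by (simp add: card_cartesian_product)
  finally show ?thesis .
qed


lemma infsum_by_len:
  fixes A :: "'a list set set" and p :: real
  assumes fin: "\<And>n. finite {x\<in>A. tlen x = n}" and p: "p \<ge> 0"
    and sm: "summable (\<lambda>n. real (card {x\<in>A. tlen x = n}) * p ^ n)"
  shows "infsum (\<lambda>x. p ^ tlen x) A = (\<Sum>n. real (card {x\<in>A. tlen x = n}) * p ^ n)"
proof -
  define B where "B = (\<lambda>n. {x\<in>A. tlen x = n})"
  define f where "f = (\<lambda>x::'a list set. p ^ tlen x)"
  have fB: "sum f (B n) = real (card (B n)) * p ^ n" for n
    unfolding f_def B_def by simp
  have summA: "f summable_on A"
  proof (rule nonneg_bdd_above_summable_on)
    show "\<And>x. x \<in> A \<Longrightarrow> 0 \<le> f x" unfolding f_def using p by simp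
    show "bdd_above (sum f ` {F. F \<subseteq> A \<and> finite F})"
    proof (rule bdd_aboveI2)
      fix F assume F: "F \<in> {F. F \<subseteq> A \<and> finite F}"
      define N where "N = Max (tlen ` F)"
      have "sum f F = (\<Sum>n\<in>{..N}. sum f {x. x \<in> F \<and> tlen x = n})"
      proof (rule sum.group[symmetric])
        show "finite F" using F by simp
        show "finite {..N}" by simp
        show "tlen ` F \<subseteq> {..N}" unfolding N_def using F by auto
      qed
      also have "\<dots> \<le> (\<Sum>n\<in>{..N}. sum f (B n))"
      proof (rule sum_mono)
        fix n show "sum f {x. x \<in> F \<and> tlen x = n} \<le> sum f (B n)"
          apply (rule sum_mono2)
          using fin F p unfolding B_def f_def by auto
      qed
      also have "\<dots> = (\<Sum>n\<in>{..N}. real (card (B n)) * p ^ n)" using fB by simp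
      also have "\<dots> \<le> (\<Sum>n. real (card (B n)) * p ^ n)"
        by (rule sum_le_suminf) (use sm p in \<open>auto simp: B_def\<close>)
      finally show "sum f F \<le> (\<Sum>n. real (card (B n)) * p ^ n)" .
    qed
  qed
  have bij: "bij_betw (\<lambda>x. (tlen x, x)) A (Sigma UNIV B)"
    by (rule bij_betwI[where g=snd]) (auto simp: B_def)
  have "infsum f A = infsum (\<lambda>(n, x). f x) (Sigma UNIV B)"
    using infsum_reindex_bij_betw[OF bij, of "\<lambda>(n, x). f x"] by simp
  also have "\<dots> = infsum (\<lambda>n. infsum f (B n)) UNIV"
  proof (rule infsum_Sigma'_banach[symmetric])
    show "(\<lambda>(n, x). f x) summable_on Sigma UNIV B"
      using summable_on_reindex_bij_betw[OF bij, of "\<lambda>(n, x). f x"] summA by simp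
  qed
  also have "\<dots> = infsum (\<lambda>n. real (card (B n)) * p ^ n) UNIV"
    using fin fB by (simp add: B_def)
  also have "\<dots> = (\<Sum>n. real (card (B n)) * p ^ n)"
  proof (rule infsumI, rule sums_nonneg_imp_has_sum)
    show "(\<lambda>n. real (card (B n)) * p ^ n) sums (\<Sum>n. real (card (B n)) * p ^ n)"
      using sm by (simp add: B_def summable_sums)
    show "\<And>n. 0 \<le> real (card (B n)) * p ^ n" using p by simp
  qed
  finally show ?thesis unfolding f_def B_def .
qed

lemma mu_alt: "mu R S X = (\<Sum>g\<in>{\<gamma>. is_clique R S \<gamma>}. (-1) ^ card g * X ^ card g)"
  by (simp add: mu_def)

lemma series_mu:
  fixes R :: "('a \<times> 'a) set" and p :: real
  assumes "finite S" "sym R" "summable (\<lambda>n. real (cnt R S n) * p ^ n)"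
  shows "(\<Sum>n. real (cnt R S n) * p ^ n) * mu R S p = 1"
proof -
  define c where "c = (\<lambda>n. real (cnt R S n))"
  define G where "G = (\<Sum>n. c n * p ^ n)"
  have sG: "(\<lambda>n. c n * p ^ n) sums G" using assms(3) unfolding G_def c_def by (simp add: summable_sums)
  define e where "e = (\<lambda>(g::'a set) m. if card g \<le> m then (-1) ^ card g * c (m - card g) * p ^ m else (0::real))"
  have se: "e g sums ((-1) ^ card g * p ^ card g * G)" for g
  proof -
    have "(\<lambda>i. e g (i + card g)) = (\<lambda>i. ((-1) ^ card g * p ^ card g) * (c i * p ^ i))"
      unfolding e_def by (auto simp: power_add)
    then have "(\<lambda>i. e g (i + card g)) sums ((-1) ^ card g * p ^ card g * G)"
      using sums_mult[OF sG] by simp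
    moreover have "(\<Sum>i<card g. e g i) = 0" unfolding e_def by simp
    ultimately show ?thesis using sums_iff_shift[of "e g" "card g"] by simp
  qed
  have "(\<lambda>m. \<Sum>g\<in>{\<gamma>. is_clique R S \<gamma>}. e g m) sums (\<Sum>g\<in>{\<gamma>. is_clique R S \<gamma>}. (-1) ^ card g * p ^ card g * G)"
    by (rule sums_sum) (rule se)
  moreover have "(\<lambda>m. \<Sum>g\<in>{\<gamma>. is_clique R S \<gamma>}. e g m) = (\<lambda>m. if m = 0 then 1 else 0)"
  proof
    fix m
    have "(\<Sum>g\<in>{\<gamma>. is_clique R S \<gamma>}. e g m) =
        p ^ m * real_of_int (\<Sum>g\<in>{\<gamma>. is_clique R S \<gamma>}. if card g \<le> m then (-1)^card g * int (cnt R S (m - card g)) else 0)"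
      unfolding e_def c_def sum_distrib_left of_int_sum by (rule sum.cong) auto
    also have "\<dots> = (if m = 0 then 1 else 0)" using mobius[OF assms(1,2), of m] by simp
    finally show "(\<Sum>g\<in>{\<gamma>. is_clique R S \<gamma>}. e g m) = (if m = 0 then 1 else 0)" .
  qed
  ultimately have "(\<lambda>m. if m = 0 then 1 else 0::real) sums (\<Sum>g\<in>{\<gamma>. is_clique R S \<gamma>}. (-1) ^ card g * p ^ card g * G)"
    by simp
  moreover have "(\<lambda>m. if m = 0 then 1 else 0::real) sums 1" using sums_single[of 0 "\<lambda>_. 1::real"] by simp
  ultimately have "(\<Sum>g\<in>{\<gamma>. is_clique R S \<gamma>}. (-1) ^ card g * p ^ card g * G) = 1"
    using sums_unique2 by blast
  moreover have "G * mu R S p = (\<Sum>g\<in>{\<gamma>. is_clique R S \<gamma>}. (-1) ^ card g * p ^ card g * G)"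
    unfolding mu_alt by (simp add: sum_distrib_left mult_ac)
  ultimately have "G * mu R S p = 1" by simp
  then show ?thesis unfolding G_def c_def .
qed


lemma root_free_ball:
  fixes R :: "('a \<times> 'a) set"
  assumes "p < p_root R Sig"
  obtains r where "r > p" "\<And>z::complex. norm z < r \<Longrightarrow> mu R Sig z \<noteq> 0"
proof (cases "{norm z | z :: complex. mu R Sig z = 0} = {}")
  case True
  show ?thesis by (rule that[of "p + 1"]) (use True in auto)
next
  case False
  show ?thesis
  proof (rule that[of "p_root R Sig"])
    show "p < p_root R Sig" by fact
    fix z :: complex assume z: "norm z < p_root R Sig"
    show "mu R Sig z \<noteq> 0"
    proof
      assume "mu R Sig z = 0"
      then have "norm z \<in> {norm z | z :: complex. mu R Sig z = 0}" by blast
      moreover have "bdd_below {norm z | z :: complex. mu R Sig z = 0}"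
        by (rule bdd_belowI[of _ 0]) auto
      ultimately have "p_root R Sig \<le> norm z" unfolding p_root_def by (rule cInf_lower)
      with z show False by simp
    qed
  qed
qed

lemma summable_cnt:
  fixes R :: "('a \<times> 'a) set" and p :: real
  assumes "finite Sig" "sym R" "0 < p" "p < p_root R Sig"
  shows "summable (\<lambda>n. real (cnt R Sig n) * p ^ n)"
proof -
  define Cl where "Cl = {\<gamma>. is_clique R Sig \<gamma>}"
  define M :: "complex fps" where "M = (\<Sum>g\<in>Cl. fps_const ((-1) ^ card g) * fps_X ^ card g)"
  define C :: "complex fps" where "C = Abs_fps (\<lambda>n. of_nat (cnt R Sig n))"
  have CM: "C * M = 1"
  proof (rule fps_ext)
    fix n
    have "C * M = (\<Sum>g\<in>Cl. fps_const ((-1) ^ card g) * (C * fps_X ^ card g))"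
      unfolding M_def by (simp add: sum_distrib_left mult_ac)
    then have "(C * M) $ n = (\<Sum>g\<in>Cl. (-1) ^ card g * (C * fps_X ^ card g) $ n)"
      by (simp add: fps_sum_nth)
    also have "\<dots> = (\<Sum>g\<in>Cl. (-1) ^ card g * (if n < card g then 0 else of_nat (cnt R Sig (n - card g))))"
      by (rule sum.cong[OF refl]) (simp add: fps_X_power_mult_right_nth C_def)
    also have "\<dots> = of_int (\<Sum>g\<in>Cl. if card g \<le> n then (-1)^card g * int (cnt R Sig (n - card g)) else 0)"
      unfolding of_int_sum by (rule sum.cong) auto
    also have "\<dots> = (if n = 0 then 1 else 0)" using mobius[OF assms(1,2), of n] unfolding Cl_def by simp
    finally show "(C * M) $ n = 1 $ n" by simp
  qed
  have M0: "M $ 0 \<noteq> 0"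
  proof
    assume "M $ 0 = 0"
    then have "(C * M) $ 0 = 0" by simp
    then show False using CM by simp
  qed
  have invM: "inverse M = C" by (rule fps_inverse_unique) (simp add: CM mult.commute)
  define f where "f = (\<lambda>z::complex. inverse (mu R Sig z))"
  have muexp: "(\<lambda>z::complex. mu R Sig z) has_fps_expansion M"
    unfolding mu_alt M_def Cl_def
    by (intro has_fps_expansion_sum has_fps_expansion_cmult_left has_fps_expansion_fps_X_power)
  have fexp: "f has_fps_expansion C"
    unfolding f_def invM[symmetric] by (rule has_fps_expansion_inverse[OF muexp M0])
  obtain r where r: "r > p" "\<And>z::complex. norm z < r \<Longrightarrow> mu R Sig z \<noteq> 0"
    using root_free_ball[OF assms(4)] by blast
  have hol: "f holomorphic_on ball 0 r"
    unfolding f_def mu_alt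
    by (intro holomorphic_intros) (use r(2) in \<open>auto simp: mu_alt\<close>)
  have "(\<lambda>n. (deriv ^^ n) f 0 / fact n * (complex_of_real p - 0) ^ n) sums f (complex_of_real p)"
    by (rule holomorphic_power_series[OF hol]) (use r(1) assms(3) in auto)
  moreover have "(deriv ^^ n) f 0 / fact n * (complex_of_real p - 0) ^ n = complex_of_real (real (cnt R Sig n) * p ^ n)" for n
    using fps_nth_fps_expansion[OF fexp, of n] by (simp add: C_def)
  ultimately have "summable (\<lambda>n. complex_of_real (real (cnt R Sig n) * p ^ n))"
    by (metis (no_types, lifting) sums_summable sums_cong)
  then show ?thesis by (simp only: summable_complex_of_real)
qed


lemma cnt_mono: "finite Sig \<Longrightarrow> S \<subseteq> Sig \<Longrightarrow> cnt R S n \<le> cnt R Sig n"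
  unfolding cnt_def by (rule card_mono[OF T_finite T_mono])

theorem mainTheorem6:
  fixes Sig :: "'a set" and R :: "('a \<times> 'a) set" and a1 :: 'a and p :: real
  assumes "finite Sig"
    and "\<forall>a\<in>Sig. (a, a) \<in> R"
    and "sym R"
    and "a1 \<in> Sig"
    and "0 < p" and "p < p_root R Sig"
  shows "Bdist R Sig p (Pyr R Sig a1)
           = mu R Sig p * p * mu R (Sig - Lnb R Sig a1) p / mu R (Sig - {a1}) p"
proof -
  let ?L = "Lnb R Sig a1"
  define S1 where "S1 = Sig - {a1}"
  define S2 where "S2 = Sig - ?L"
  have finS: "finite S1" "finite S2" "S1 \<subseteq> Sig" "S2 \<subseteq> Sig" using assms(1) by (auto simp: S1_def S2_def)
  have p0: "p \<ge> 0" using assms(5) by simp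
  have s0: "summable (\<lambda>n. real (cnt R Sig n) * p ^ n)"
    by (rule summable_cnt[OF assms(1,3,5,6)])
  have cmp: "summable (\<lambda>n. real (f n) * p ^ n)" if "\<And>n. f n \<le> cnt R Sig n" for f
  proof (rule summable_comparison_test[OF _ s0])
    show "\<exists>N. \<forall>n\<ge>N. norm (real (f n) * p ^ n) \<le> real (cnt R Sig n) * p ^ n"
      using that p0 by (intro exI[of _ 0]) (auto intro!: mult_right_mono)
  qed
  have s1: "summable (\<lambda>n. real (cnt R S1 n) * p ^ n)" by (rule cmp) (rule cnt_mono[OF assms(1) finS(3)])
  have s2: "summable (\<lambda>n. real (cnt R S2 n) * p ^ n)" by (rule cmp) (rule cnt_mono[OF assms(1) finS(4)])
  have sz: "summable (\<lambda>n. real (card (Z R Sig a1 n)) * p ^ n)"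
    by (rule cmp) (unfold cnt_def, rule card_mono[OF T_finite[OF assms(1)] Z_sub])
  define G1 where "G1 = (\<Sum>n. real (cnt R S1 n) * p ^ n)"
  define G2 where "G2 = (\<Sum>n. real (cnt R S2 n) * p ^ n)"
  define Zs where "Zs = (\<Sum>n. real (card (Z R Sig a1 n)) * p ^ n)"
  have m1: "G1 * mu R S1 p = 1" unfolding G1_def by (rule series_mu[OF finS(1) assms(3) s1])
  have m2: "G2 * mu R S2 p = 1" unfolding G2_def by (rule series_mu[OF finS(2) assms(3) s2])
  have a1a1: "(a1, a1) \<in> R" using assms(2,4) by simp
  have "Zs * G2 = (\<Sum>n. \<Sum>i\<le>n. (real (card (Z R Sig a1 i)) * p ^ i) * (real (cnt R S2 (n - i)) * p ^ (n - i)))"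
    unfolding Zs_def G2_def
    by (rule Cauchy_product) (use sz s2 p0 in auto)
  also have "\<dots> = (\<Sum>n. real (cnt R S1 n) * p ^ n)"
  proof (rule suminf_cong)
    fix n
    have "(\<Sum>i\<le>n. (real (card (Z R Sig a1 i)) * p ^ i) * (real (cnt R S2 (n - i)) * p ^ (n - i)))
        = (\<Sum>i\<le>n. real (card (Z R Sig a1 i) * cnt R S2 (n - i)) * p ^ n)"
    proof (rule sum.cong[OF refl])
      fix i assume "i \<in> {..n}"
      then have "p ^ i * p ^ (n - i) = p ^ n" by (simp add: power_add[symmetric])
      then show "(real (card (Z R Sig a1 i)) * p ^ i) * (real (cnt R S2 (n - i)) * p ^ (n - i))
          = real (card (Z R Sig a1 i) * cnt R S2 (n - i)) * p ^ n"
        by (simp add: algebra_simps)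
    qed
    also have "\<dots> = real (cnt R S1 n) * p ^ n"
      unfolding cnt_def S1_def S2_def conv_count[OF assms(1,3,4) a1a1, of n]
      by (simp add: sum_distrib_right)
    finally show "(\<Sum>i\<le>n. (real (card (Z R Sig a1 i)) * p ^ i) * (real (cnt R S2 (n - i)) * p ^ (n - i)))
        = real (cnt R S1 n) * p ^ n" .
  qed
  finally have ZG: "Zs * G2 = G1" unfolding G1_def .
  have mu1: "mu R S1 p \<noteq> 0" using m1 by auto
  have Zval: "Zs = mu R S2 p / mu R S1 p"
  proof -
    have "Zs = Zs * (G2 * mu R S2 p)" using m2 by simp
    also have "\<dots> = G1 * mu R S2 p" using ZG by (simp add: mult.assoc[symmetric])
    also have "G1 = 1 / mu R S1 p" using m1 mu1 by (simp add: field_simps)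
    finally show ?thesis by simp
  qed
  define a where "a = (\<lambda>n. real (card {x \<in> Pyr R Sig a1. tlen x = n}) * p ^ n)"
  have aS: "a (Suc n) = p * (real (card (Z R Sig a1 n)) * p ^ n)" for n
    unfolding a_def Pyr_Suc by simp
  have a0: "a 0 = 0" unfolding a_def Pyr_0 by simp
  have "(\<lambda>n. a (Suc n)) sums (p * Zs)"
    unfolding aS Zs_def by (rule sums_mult) (use sz in \<open>simp add: summable_sums\<close>)
  then have as: "a sums (p * Zs)" using sums_Suc_iff[of a] a0 by simp
  have finP: "finite {x \<in> Pyr R Sig a1. tlen x = n}" for n
  proof (rule finite_subset[OF _ T_finite[OF assms(1), of R n]])
    show "{x \<in> Pyr R Sig a1. tlen x = n} \<subseteq> T R Sig n"
    proof
      fix x assume "x \<in> {x \<in> Pyr R Sig a1. tlen x = n}"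
      then obtain w where "x = trace_class R (w @ [a1])" "set w \<subseteq> Sig - {a1}" "length w + 1 = n"
        by (auto simp: Pyr_def)
      then show "x \<in> T R Sig n" unfolding T_def using assms(4) by (intro CollectI exI[of _ "w @ [a1]"]) auto
    qed
  qed
  have "infsum (\<lambda>x. p ^ tlen x) (Pyr R Sig a1) = (\<Sum>n. a n)"
    unfolding a_def by (rule infsum_by_len[OF finP p0]) (use as in \<open>simp add: a_def sums_summable\<close>)
  also have "\<dots> = p * Zs" using as by (simp add: sums_iff)
  finally have ip: "infsum (\<lambda>x. p ^ tlen x) (Pyr R Sig a1) = p * Zs" .
  have "Bdist R Sig p (Pyr R Sig a1) = mu R Sig p * infsum (\<lambda>x. p ^ tlen x) (Pyr R Sig a1)"
    unfolding Bdist_def by (rule infsum_cmult_right')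
  also have "\<dots> = mu R Sig p * p * mu R S2 p / mu R S1 p" using ip Zval by simp
  finally show ?thesis unfolding S1_def S2_def .
qed

end
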